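(* Let $X$ be a complete CAT(0) space, $f:X\to(-\infty,\infty]$ a proper, convex, lower semicontinuous function, $C\subseteq X$ nonempty, and $\psi:[0,\infty)\to[0,\infty)$ an increasing function vanishing only at $0$. Assume $f$ is uniformly convex on $C$ with modulus $\psi$, and let $\gamma>0$ be such that $J_\gamma(C)\subseteq C$. Then: (1) for all $u,v\in C$, $d^2(J_\gamma u,v)\le d^2(u,v)-d^2(u,J_\gamma u)-2\gamma(f(J_\gamma u)-f(v))-2\gamma\psi(d(v,J_\gamma u))$; (2) for all $x,y\in C$, $d^2(J_\gamma x,J_\gamma y)\le d^2(x,y)-4\gamma\psi(d(J_\gamma x,J_\gamma y))$.
   Context: A geodesic space $(X,d)$ is CAT(0) if for all $z\in X$, all geodesics $\gamma:[a,b]\to X$ and all $t\in[0,1]$, $d^2(z,\gamma((1-t)a+tb))\le(1-t)d^2(z,\gamma(a))+td^2(z,\gamma(b))-t(1-t)d^2(\gamma(a),\gamma(b))$; $(1-t)x+ty$ denotes the point at distance $t\,d(x,y)$ from $x$ on the unique geodesic from $x$ to $y$. $J_\gamma(x):=\arg\min_{y\in X}\left[f(y)+\frac1{2\gamma}d^2(x,y)\right]$ (exists uniquely). $f$ is uniformly convex on $C$ with modulus $\psi$ if for all $x,y\in C$, $t\in[0,1]$: $f((1-t)x+ty)\le(1-t)f(x)+tf(y)-t(1-t)\psi(d(x,y))$. *)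

theory Defs
  imports "HOL-Analysis.Analysis" "HOL-Library.Extended_Real"
begin

definition geodesic :: "(real \<Rightarrow> 'a::metric_space) \<Rightarrow> real \<Rightarrow> real \<Rightarrow> bool" where
  "geodesic g a b \<longleftrightarrow> a \<le> b \<and> (\<forall>s\<in>{a..b}. \<forall>t\<in>{a..b}. dist (g s) (g t) = \<bar>s - t\<bar>)"

definition geodesic_space :: "'a::metric_space itself \<Rightarrow> bool" where
  "geodesic_space _ \<longleftrightarrow> (\<forall>x y::'a. \<exists>g. geodesic g 0 (dist x y) \<and> g 0 = x \<and> g (dist x y) = y)"

definition CAT0 :: "'a::metric_space itself \<Rightarrow> bool" where
  "CAT0 T \<longleftrightarrow> geodesic_space T \<and>
     (\<forall>(z::'a) g a b t. geodesic g a b \<longrightarrow> t \<in> {0..1} \<longrightarrow>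
        (dist z (g ((1 - t) * a + t * b)))\<^sup>2
          \<le> (1 - t) * (dist z (g a))\<^sup>2 + t * (dist z (g b))\<^sup>2
             - t * (1 - t) * (dist (g a) (g b))\<^sup>2)"

(* (1-t)x + ty : the point at distance t d(x,y) from x on the (unique) geodesic from x to y *)
definition geo_comb :: "real \<Rightarrow> 'a::metric_space \<Rightarrow> 'a \<Rightarrow> 'a" where
  "geo_comb t x y = (THE z. \<exists>g. geodesic g 0 (dist x y) \<and> g 0 = x \<and> g (dist x y) = y
                               \<and> z = g (t * dist x y))"

definition proper_fun :: "('a \<Rightarrow> ereal) \<Rightarrow> bool" where
  "proper_fun f \<longleftrightarrow> (\<forall>x. f x \<noteq> -\<infinity>) \<and> (\<exists>x. f x \<noteq> \<infinity>)"

definition convex_fun :: "('a::metric_space \<Rightarrow> ereal) \<Rightarrow> bool" where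
  "convex_fun f \<longleftrightarrow> (\<forall>x y t. t \<in> {0..1} \<longrightarrow>
      f (geo_comb t x y) \<le> ereal (1 - t) * f x + ereal t * f y)"

definition lsc_fun :: "('a::topological_space \<Rightarrow> ereal) \<Rightarrow> bool" where
  "lsc_fun f \<longleftrightarrow> (\<forall>c. closed {x. f x \<le> c})"

definition uniformly_convex_on :: "'a::metric_space set \<Rightarrow> (real \<Rightarrow> real) \<Rightarrow> ('a \<Rightarrow> ereal) \<Rightarrow> bool" where
  "uniformly_convex_on C \<psi> f \<longleftrightarrow> (\<forall>x\<in>C. \<forall>y\<in>C. \<forall>t\<in>{0..1}.
      f (geo_comb t x y) \<le> ereal (1 - t) * f x + ereal t * f y - ereal (t * (1 - t) * \<psi> (dist x y)))"

definition resolvent :: "('a::metric_space \<Rightarrow> ereal) \<Rightarrow> real \<Rightarrow> 'a \<Rightarrow> 'a" where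
  "resolvent f \<gamma> x = arg_min (\<lambda>y. f y + ereal ((dist x y)\<^sup>2 / (2 * \<gamma>))) (\<lambda>_. True)"

end

theory Submission
  imports Defs
begin


lemma geo_comb_props:
  fixes x y z :: "'a::metric_space"
  assumes cat: "CAT0 TYPE('a::metric_space)" and t: "0 \<le> t" "t \<le> 1"
  shows "dist x (geo_comb t x y) = t * dist x y"
    and "dist (geo_comb t x y) y = (1-t) * dist x y"
    and "(dist z (geo_comb t x y))\<^sup>2 \<le> (1-t)*(dist z x)\<^sup>2 + t*(dist z y)\<^sup>2 - t*(1-t)*(dist x y)\<^sup>2"
proof -
  let ?d = "dist x y"
  from cat obtain g where g: "geodesic g 0 ?d" "g 0 = x" "g ?d = y"
    unfolding CAT0_def geodesic_space_def by metis
  have cat2: "\<And>(z::'a) g a b t. geodesic g a b \<Longrightarrow> t \<in> {0..1} \<Longrightarrow>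
        (dist z (g ((1 - t) * a + t * b)))\<^sup>2
          \<le> (1 - t) * (dist z (g a))\<^sup>2 + t * (dist z (g b))\<^sup>2
             - t * (1 - t) * (dist (g a) (g b))\<^sup>2"
    using cat unfolding CAT0_def by blast
  have td: "t * ?d \<in> {0..?d}" using t by (auto simp: mult_left_le_one_le)
  have gd: "\<And>s r. s \<in> {0..?d} \<Longrightarrow> r \<in> {0..?d} \<Longrightarrow> dist (g s) (g r) = \<bar>s - r\<bar>"
    using g(1) unfolding geodesic_def by blast
  have uniq: "h (t * ?d) = g (t * ?d)" if h: "geodesic h 0 ?d" "h 0 = x" "h ?d = y" for h
  proof -
    have hd: "\<And>s r. s \<in> {0..?d} \<Longrightarrow> r \<in> {0..?d} \<Longrightarrow> dist (h s) (h r) = \<bar>s - r\<bar>"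
      using h(1) unfolding geodesic_def by blast
    have "(dist (h (t*?d)) (g ((1-t)*0 + t*?d)))\<^sup>2 \<le> (1-t)*(dist (h (t*?d)) (g 0))\<^sup>2
        + t*(dist (h (t*?d)) (g ?d))\<^sup>2 - t*(1-t)*(dist (g 0) (g ?d))\<^sup>2"
      using cat2[OF g(1), of t "h (t*?d)"] t by auto
    moreover have "dist (h (t*?d)) (g 0) = t * ?d"
      using hd[OF td, of 0] h(2) g(2) td by auto
    moreover have "dist (h (t*?d)) (g ?d) = (1-t) * ?d"
      using hd[OF td, of ?d] h(3) g(3) td t by (auto simp: algebra_simps)
    moreover have "dist (g 0) (g ?d) = ?d" using g by simp
    ultimately have "(dist (h (t*?d)) (g (t*?d)))\<^sup>2 \<le> 0"
      by (simp add: power2_eq_square algebra_simps)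
    then show ?thesis by simp
  qed
  have eq: "geo_comb t x y = g (t * ?d)"
    unfolding geo_comb_def
  proof (rule the_equality)
    show "\<exists>h. geodesic h 0 ?d \<and> h 0 = x \<and> h ?d = y \<and> g (t * ?d) = h (t * ?d)"
      using g by blast
  next
    fix z assume "\<exists>h. geodesic h 0 ?d \<and> h 0 = x \<and> h ?d = y \<and> z = h (t * ?d)"
    then show "z = g (t * ?d)" using uniq by blast
  qed
  show "dist x (geo_comb t x y) = t * ?d"
    using gd[OF _ td, of 0] g(2) td by (auto simp: eq)
  show "dist (geo_comb t x y) y = (1-t) * ?d"
    using gd[OF td, of ?d] g(3) td t by (auto simp: eq algebra_simps)
  have "(dist z (g ((1-t)*0 + t*?d)))\<^sup>2 \<le> (1-t)*(dist z (g 0))\<^sup>2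
        + t*(dist z (g ?d))\<^sup>2 - t*(1-t)*(dist (g 0) (g ?d))\<^sup>2"
    using cat2[OF g(1), of t z] t by auto
  then show "(dist z (geo_comb t x y))\<^sup>2 \<le> (1-t)*(dist z x)\<^sup>2 + t*(dist z y)\<^sup>2 - t*(1-t)*(dist x y)\<^sup>2"
    using g by (simp add: eq)
qed

lemma quad:
  fixes x y a b :: "'a::metric_space"
  assumes cat: "CAT0 TYPE('a::metric_space)"
  shows "(dist x b)\<^sup>2 + (dist y a)\<^sup>2 \<le> (dist x a)\<^sup>2 + (dist y b)\<^sup>2 + (dist x y)\<^sup>2 + (dist a b)\<^sup>2"
proof -
  define m where "m = geo_comb (1/2) x b"
  define n where "n = geo_comb (1/2) a y"
  have 1: "(dist m n)\<^sup>2 \<le> (1/2)*(dist m a)\<^sup>2 + (1/2)*(dist m y)\<^sup>2 - (1/2)*(1/2)*(dist a y)\<^sup>2"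
    using geo_comb_props(3)[OF cat, of "1/2" m a y] unfolding n_def by auto
  have 2: "(dist a m)\<^sup>2 \<le> (1/2)*(dist a x)\<^sup>2 + (1/2)*(dist a b)\<^sup>2 - (1/2)*(1/2)*(dist x b)\<^sup>2"
    using geo_comb_props(3)[OF cat, of "1/2" a x b] unfolding m_def by auto
  have 3: "(dist y m)\<^sup>2 \<le> (1/2)*(dist y x)\<^sup>2 + (1/2)*(dist y b)\<^sup>2 - (1/2)*(1/2)*(dist x b)\<^sup>2"
    using geo_comb_props(3)[OF cat, of "1/2" y x b] unfolding m_def by auto
  have 0: "0 \<le> (dist m n)\<^sup>2" by simp
  have e: "dist m a = dist a m" "dist y x = dist x y" "dist y b = dist b y" "dist a x = dist x a"
    "dist y m = dist m y" "dist a y = dist y a" "dist b x = dist x b"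
    by (simp_all add: dist_commute)
  show ?thesis using 0 1 2 3 unfolding e by linarith
qed



lemma lower_bound:
  fixes f :: "'a::metric_space \<Rightarrow> ereal" and x0 :: 'a
  assumes cat: "CAT0 TYPE('a)" and cvx: "convex_fun f" and lsc: "lsc_fun f"
    and f0: "f x0 = ereal a0" and ninf: "\<And>x. f x \<noteq> -\<infinity>"
  shows "\<exists>c\<ge>0. \<forall>y. ereal (-c*(1+dist x0 y)) \<le> f y"
proof (rule ccontr)
  assume "\<not> ?thesis"
  then have "\<forall>n::nat. \<exists>y. f y < ereal (-(real (Suc n))\<^sup>2 * (1+dist x0 y))"
    by (metis not_le zero_le_power2)
  then obtain Y where Y: "\<And>n. f (Y n) < ereal (-(real (Suc n))\<^sup>2 * (1+dist x0 (Y n)))"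
    by metis
  define t where "t n = 1/(real (Suc n) * (1 + dist x0 (Y n)))" for n
  define Z where "Z n = geo_comb (t n) x0 (Y n)" for n
  have t0: "0 < t n" for n unfolding t_def by (simp add: add_pos_nonneg)
  have t1: "t n \<le> 1" for n
  proof -
    have "1 \<le> real (Suc n) * (1 + dist x0 (Y n))"
      using mult_mono[of 1 "real (Suc n)" 1 "1 + dist x0 (Y n)"] by simp
    then show ?thesis unfolding t_def by simp
  qed
  have fZ: "f (Z n) \<le> ereal (\<bar>a0\<bar> - real (Suc n))" for n
  proof -
    obtain b where b: "f (Y n) = ereal b" using Y[of n] ninf[of "Y n"]
      by (cases "f (Y n)") auto
    have blt: "b < -(real (Suc n))\<^sup>2 * (1+dist x0 (Y n))" using Y[of n] b by simp
    have "t n * b < t n * (-(real (Suc n))\<^sup>2 * (1+dist x0 (Y n)))"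
      using mult_strict_left_mono[OF blt t0[of n]] .
    also have "\<dots> = - real (Suc n)"
    proof -
      have nz: "real (Suc n) * (1 + dist x0 (Y n)) \<noteq> 0"
        by (metis add_pos_nonneg mult_pos_pos of_nat_0_less_iff zero_less_Suc zero_less_one zero_le_dist less_irrefl)
      show ?thesis unfolding t_def using nz
        by (simp add: power2_eq_square divide_simps)
    qed
    finally have tb: "t n * b < - real (Suc n)" .
    have "f (Z n) \<le> ereal (1 - t n) * f x0 + ereal (t n) * f (Y n)"
      using cvx t0[of n] t1[of n] unfolding convex_fun_def Z_def by auto
    also have "\<dots> = ereal ((1 - t n) * a0 + t n * b)" using f0 b by simp
    also have "\<dots> \<le> ereal (\<bar>a0\<bar> - real (Suc n))"
    proof -
      have "(1 - t n) * a0 \<le> (1 - t n) * \<bar>a0\<bar>" using t1[of n] by (intro mult_left_mono) auto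
      also have "\<dots> \<le> \<bar>a0\<bar>" using t0[of n] by (simp add: algebra_simps)
      finally show ?thesis using tb by simp
    qed
    finally show ?thesis .
  qed
  have dZ: "dist (Z n) x0 \<le> 1 / real (Suc n)" for n
  proof -
    have "dist (Z n) x0 = t n * dist x0 (Y n)"
      using geo_comb_props(1)[OF cat, of "t n" x0 "Y n"] t0[of n] t1[of n]
      by (simp add: Z_def dist_commute)
    also have "\<dots> \<le> 1 / real (Suc n)"
      unfolding t_def by (simp add: field_simps add_pos_nonneg)
    finally show ?thesis .
  qed
  have lim: "Z \<longlonglongrightarrow> x0"
  proof (rule metric_LIMSEQ_I)
    fix r :: real assume "0 < r"
    then obtain N where N: "N > 0" "inverse (real N) < r" using ex_inverse_of_nat_less by blast
    show "\<exists>no. \<forall>n\<ge>no. dist (Z n) x0 < r"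
    proof (intro exI allI impI)
      fix n assume "N \<le> n"
      have "1 / real (Suc n) \<le> inverse (real N)" using N `N \<le> n`
        by (simp add: divide_simps)
      then show "dist (Z n) x0 < r" using dZ[of n] N by linarith
    qed
  qed
  obtain N :: nat where N: "\<bar>a0\<bar> - a0 + 1 \<le> real N" using real_arch_simple by blast
  have ev: "eventually (\<lambda>n. Z n \<in> {x. f x \<le> ereal (a0 - 1)}) sequentially"
    unfolding eventually_sequentially
  proof (intro exI allI impI)
    fix n assume "N \<le> n"
    then have "\<bar>a0\<bar> - real (Suc n) \<le> a0 - 1" using N by simp
    then show "Z n \<in> {x. f x \<le> ereal (a0 - 1)}" using fZ[of n] order.trans by fastforce
  qed
  have "x0 \<in> {x. f x \<le> ereal (a0 - 1)}"
    by (rule Lim_in_closed_set[OF _ ev _ lim]) (use lsc in \<open>auto simp: lsc_fun_def\<close>)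
  then show False using f0 by simp
qed



lemma resolvent_min:
  fixes f :: "'a::complete_space \<Rightarrow> ereal" and x :: 'a
  assumes cat: "CAT0 TYPE('a)" and prp: "proper_fun f" and cvx: "convex_fun f"
    and lsc: "lsc_fun f" and gam: "\<gamma> > 0"
  shows "f (resolvent f \<gamma> x) + ereal ((dist x (resolvent f \<gamma> x))\<^sup>2 / (2 * \<gamma>))
           \<le> f y + ereal ((dist x y)\<^sup>2 / (2 * \<gamma>))"
proof -
  define F where "F = (\<lambda>y. f y + ereal ((dist x y)\<^sup>2 / (2 * \<gamma>)))"
  have ninf: "\<And>y. f y \<noteq> -\<infinity>" using prp unfolding proper_fun_def by blast
  obtain x0 where "f x0 \<noteq> \<infinity>" using prp unfolding proper_fun_def by blast
  then obtain a0 where f0: "f x0 = ereal a0" using ninf[of x0] by (cases "f x0") auto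
  obtain c where c0: "c \<ge> 0" and cb: "\<And>y. ereal (-c*(1+dist x0 y)) \<le> f y"
    using lower_bound[OF cat cvx lsc f0 ninf] by blast
  define M where "M = -c*(1+dist x0 x) - c\<^sup>2*\<gamma>/2"
  have FM: "ereal M \<le> F y" for y
  proof -
    let ?s = "dist x y"
    have "dist x0 y \<le> dist x0 x + ?s" by (rule dist_triangle)
    then have "c * dist x0 y \<le> c * (dist x0 x + ?s)" using c0 by (rule mult_left_mono)
    then have "-c*(1+dist x0 y) \<ge> -c*(1+dist x0 x) - c*?s"
      by (simp add: algebra_simps)
    moreover have "?s\<^sup>2/(2*\<gamma>) - c*?s + c\<^sup>2*\<gamma>/2 = (?s - c*\<gamma>)\<^sup>2/(2*\<gamma>)"
      using gam by (simp add: power2_eq_square field_simps)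
    moreover have "(?s - c*\<gamma>)\<^sup>2/(2*\<gamma>) \<ge> 0" using gam by simp
    ultimately have "M \<le> -c*(1+dist x0 y) + ?s\<^sup>2/(2*\<gamma>)" unfolding M_def by linarith
    then have "ereal M \<le> ereal (-c*(1+dist x0 y)) + ereal (?s\<^sup>2/(2*\<gamma>))" by simp
    also have "\<dots> \<le> F y" unfolding F_def using cb[of y] by (rule add_right_mono)
    finally show ?thesis .
  qed
  define m where "m = Inf (range F)"
  have mle: "m \<le> F y" for y unfolding m_def by (rule Inf_lower) simp
  have Mm: "ereal M \<le> m" unfolding m_def using FM by (auto intro: Inf_greatest)
  have "m \<noteq> \<infinity>" using mle[of x0] f0 unfolding F_def by auto
  then obtain mr where mr: "m = ereal mr" using Mm by (cases m) auto
  have "\<forall>n::nat. \<exists>y. F y < ereal (mr + inverse (real (Suc n)))"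
  proof
    fix n :: nat
    have "m < ereal (mr + inverse (real (Suc n)))" using mr by simp
    then show "\<exists>y. F y < ereal (mr + inverse (real (Suc n)))"
      unfolding m_def by (simp add: Inf_less_iff)
  qed
  then obtain Y where Y: "\<And>n. F (Y n) < ereal (mr + inverse (real (Suc n)))" by metis
  have Ffin: "\<exists>p. F z = ereal p \<and> f z = ereal (p - (dist x z)\<^sup>2/(2*\<gamma>))" if "F z \<noteq> \<infinity>" for z
  proof -
    have "f z \<noteq> \<infinity>" using that unfolding F_def by auto
    then obtain r where "f z = ereal r" using ninf[of z] by (cases "f z") auto
    then show ?thesis unfolding F_def by auto
  qed
  have mid: "(dist y z)\<^sup>2/(8*\<gamma>) \<le> p/2 + q/2 - mr"
    if p: "F y = ereal p" "f y = ereal (p - (dist x y)\<^sup>2/(2*\<gamma>))"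
    and q: "F z = ereal q" "f z = ereal (q - (dist x z)\<^sup>2/(2*\<gamma>))" for y z p q
  proof -
    define w where "w = geo_comb (1/2) y z"
    have fw: "f w \<le> ereal (1 - 1/2) * f y + ereal (1/2) * f z"
      using cvx unfolding convex_fun_def w_def
      by (erule_tac allE[where x=y], erule_tac allE[where x=z], erule_tac allE[where x="1/2::real"]) simp
    also have "\<dots> = ereal ((p - (dist x y)\<^sup>2/(2*\<gamma>))/2 + (q - (dist x z)\<^sup>2/(2*\<gamma>))/2)"
      using p q by simp
    finally have fw: "f w \<le> ereal ((p - (dist x y)\<^sup>2/(2*\<gamma>))/2 + (q - (dist x z)\<^sup>2/(2*\<gamma>))/2)" .
    then obtain r where r: "f w = ereal r" using ninf[of w] by (cases "f w") auto
    have dw: "(dist x w)\<^sup>2 \<le> (1-1/2)*(dist x y)\<^sup>2 + (1/2)*(dist x z)\<^sup>2 - (1/2)*(1-1/2)*(dist y z)\<^sup>2"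
      unfolding w_def by (rule geo_comb_props(3)[OF cat]) auto
    have "ereal mr \<le> F w" using mle[of w] mr by simp
    then have A: "mr \<le> r + (dist x w)\<^sup>2/(2*\<gamma>)" using r unfolding F_def by simp
    have B: "r \<le> (p - (dist x y)\<^sup>2/(2*\<gamma>))/2 + (q - (dist x z)\<^sup>2/(2*\<gamma>))/2" using fw r by simp
    have C: "(dist x w)\<^sup>2/(2*\<gamma>) \<le> ((1-1/2)*(dist x y)\<^sup>2 + (1/2)*(dist x z)\<^sup>2 - (1/2)*(1-1/2)*(dist y z)\<^sup>2)/(2*\<gamma>)"
      using dw gam by (intro divide_right_mono) auto
    have C2: "((1-1/2)*(dist x y)\<^sup>2 + (1/2)*(dist x z)\<^sup>2 - (1/2)*(1-1/2)*(dist y z)\<^sup>2)/(2*\<gamma>)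
       = (1/2)*((dist x y)\<^sup>2/(2*\<gamma>)) + (1/2)*((dist x z)\<^sup>2/(2*\<gamma>)) - (1/4)*((dist y z)\<^sup>2/(2*\<gamma>))"
      using gam by (simp add: field_simps)
    have D: "(dist y z)\<^sup>2/(8*\<gamma>) = (1/4)*((dist y z)\<^sup>2/(2*\<gamma>))" using gam by (simp add: field_simps)
    have F: "\<And>mr r DW DY DZ E G. mr \<le> r + DW \<Longrightarrow> r \<le> (p-DY)/2 + (q-DZ)/2 \<Longrightarrow> DW \<le> G
       \<Longrightarrow> G = 1/2*DY + 1/2*DZ - 1/4*E \<Longrightarrow> 1/4*E \<le> p/2+q/2 - (mr::real)" by (simp add: field_simps)
    show ?thesis unfolding D by (rule F[OF A B C C2])
  qed
  have Yfin: "\<exists>p. F (Y n) = ereal p \<and> f (Y n) = ereal (p - (dist x (Y n))\<^sup>2/(2*\<gamma>))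
       \<and> mr \<le> p \<and> p < mr + inverse (real (Suc n))" for n
  proof -
    have "F (Y n) \<noteq> \<infinity>" using Y[of n] by auto
    then obtain p where "F (Y n) = ereal p" "f (Y n) = ereal (p - (dist x (Y n))\<^sup>2/(2*\<gamma>))"
      using Ffin by blast
    moreover have "mr \<le> p" using mle[of "Y n"] mr \<open>F (Y n) = ereal p\<close> by simp
    moreover have "p < mr + inverse (real (Suc n))" using Y[of n] \<open>F (Y n) = ereal p\<close> by simp
    ultimately show ?thesis by blast
  qed
  then obtain P where P: "\<And>n. F (Y n) = ereal (P n)" "\<And>n. f (Y n) = ereal (P n - (dist x (Y n))\<^sup>2/(2*\<gamma>))"
    "\<And>n. mr \<le> P n" "\<And>n. P n < mr + inverse (real (Suc n))" by metis
  have "Cauchy Y"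
  proof (rule metric_CauchyI)
    fix e :: real assume e: "0 < e"
    then have "0 < e\<^sup>2/(8*\<gamma>)" using gam by simp
    then obtain N :: nat where N: "N > 0" "inverse (real N) < e\<^sup>2/(8*\<gamma>)"
      using ex_inverse_of_nat_less by blast
    show "\<exists>M. \<forall>m\<ge>M. \<forall>n\<ge>M. dist (Y m) (Y n) < e"
    proof (intro exI allI impI)
      fix i j assume ij: "N \<le> i" "N \<le> j"
      have iN: "inverse (real (Suc k)) \<le> inverse (real N)" if "N \<le> k" for k
        using that N by (simp add: divide_simps)
      have "(dist (Y i) (Y j))\<^sup>2/(8*\<gamma>) \<le> P i/2 + P j/2 - mr"
        using mid[OF P(1,2) P(1,2)] .
      also have "\<dots> < e\<^sup>2/(8*\<gamma>)" using P(4)[of i] P(4)[of j] iN[OF ij(1)] iN[OF ij(2)] N by linarith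
      finally have "(dist (Y i) (Y j))\<^sup>2 < e\<^sup>2" using gam by (simp add: divide_simps)
      then show "dist (Y i) (Y j) < e" using e by (simp add: power_less_imp_less_base)
    qed
  qed
  then obtain ys where lim: "Y \<longlonglongrightarrow> ys" using Cauchy_convergent_iff convergent_def by blast
  define L where "L = mr - (dist x ys)\<^sup>2/(2*\<gamma>)"
  have gl: "(\<lambda>n. mr + inverse (real (Suc n)) - (dist x (Y n))\<^sup>2/(2*\<gamma>)) \<longlonglongrightarrow> L"
  proof -
    have "(\<lambda>n. mr + inverse (real (Suc n))) \<longlonglongrightarrow> mr + 0"
      by (intro tendsto_add tendsto_const LIMSEQ_inverse_real_of_nat)
    then have h1: "(\<lambda>n. mr + inverse (real (Suc n))) \<longlonglongrightarrow> mr" by simp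
    have h2: "(\<lambda>n. (dist x (Y n))\<^sup>2/(2*\<gamma>)) \<longlonglongrightarrow> (dist x ys)\<^sup>2/(2*\<gamma>)"
    proof -
      have "(\<lambda>n. dist x (Y n)) \<longlonglongrightarrow> dist x ys" by (intro tendsto_dist tendsto_const lim)
      then have "(\<lambda>n. (dist x (Y n))\<^sup>2) \<longlonglongrightarrow> (dist x ys)\<^sup>2" by (rule tendsto_power)
      then show ?thesis by (rule tendsto_divide[OF _ tendsto_const]) (use gam in simp)
    qed
    show ?thesis unfolding L_def by (rule tendsto_diff[OF h1 h2])
  qed
  have fle: "f ys \<le> ereal (L + e)" if e: "e > 0" for e
  proof -
    have ev: "eventually (\<lambda>n. mr + inverse (real (Suc n)) - (dist x (Y n))\<^sup>2/(2*\<gamma>) < L + e) sequentially"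
      by (rule order_tendstoD(2)[OF gl]) (use e in simp)
    have ev2: "eventually (\<lambda>n. Y n \<in> {y. f y \<le> ereal (L + e)}) sequentially"
      using ev
    proof (rule eventually_mono)
      fix n assume "mr + inverse (real (Suc n)) - (dist x (Y n))\<^sup>2/(2*\<gamma>) < L + e"
      then show "Y n \<in> {y. f y \<le> ereal (L + e)}" using P(2)[of n] P(4)[of n] by simp
    qed
    have "ys \<in> {y. f y \<le> ereal (L + e)}"
      by (rule Lim_in_closed_set[OF _ ev2 _ lim]) (use lsc in \<open>auto simp: lsc_fun_def\<close>)
    then show ?thesis by simp
  qed
  have "f ys \<noteq> \<infinity>" using fle[of 1] by auto
  then obtain r where r: "f ys = ereal r" using ninf[of ys] by (cases "f ys") auto
  have "r \<le> L"
  proof (rule field_le_epsilon)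
    fix e :: real assume "0 < e" then show "r \<le> L + e" using fle[of e] r by simp
  qed
  then have Fys: "F ys \<le> ereal mr" unfolding F_def r L_def by simp
  have "is_arg_min F (\<lambda>_. True) ys"
    unfolding is_arg_min_def
  proof (intro conjI notI)
    assume "\<exists>y. True \<and> F y < F ys"
    then obtain y where "F y < F ys" by blast
    moreover have "F ys \<le> F y" using Fys mle[of y] mr by simp
    ultimately show False by simp
  qed simp
  then have "is_arg_min F (\<lambda>_. True) (resolvent f \<gamma> x)"
    unfolding resolvent_def arg_min_def F_def[symmetric] by (rule someI)
  then have "\<not> F y < F (resolvent f \<gamma> x)" unfolding is_arg_min_def by blast
  then show ?thesis unfolding F_def by simp
qed



lemma resolvent_fin:
  fixes f :: "'a::complete_space \<Rightarrow> ereal" and x :: 'a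
  assumes cat: "CAT0 TYPE('a)" and prp: "proper_fun f" and cvx: "convex_fun f"
    and lsc: "lsc_fun f" and gam: "\<gamma> > 0"
  shows "\<exists>a. f (resolvent f \<gamma> x) = ereal a"
proof -
  have ninf: "\<And>y. f y \<noteq> -\<infinity>" using prp unfolding proper_fun_def by blast
  obtain x0 where x0: "f x0 \<noteq> \<infinity>" using prp unfolding proper_fun_def by blast
  have "f (resolvent f \<gamma> x) + ereal ((dist x (resolvent f \<gamma> x))\<^sup>2 / (2 * \<gamma>))
           \<le> f x0 + ereal ((dist x x0)\<^sup>2 / (2 * \<gamma>))"
    by (rule resolvent_min[OF cat prp cvx lsc gam])
  then have "f (resolvent f \<gamma> x) \<noteq> \<infinity>" using x0 by auto
  then show ?thesis using ninf[of "resolvent f \<gamma> x"] by (cases "f (resolvent f \<gamma> x)") auto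
qed

lemma part1:
  fixes f :: "'a::complete_space \<Rightarrow> ereal" and u v :: 'a
  assumes cat: "CAT0 TYPE('a)" and prp: "proper_fun f" and cvx: "convex_fun f"
    and lsc: "lsc_fun f" and gam: "\<gamma> > 0"
    and psi0: "\<And>t. t \<ge> 0 \<Longrightarrow> \<psi> t \<ge> 0"
    and ucv: "uniformly_convex_on C \<psi> f" and JC: "resolvent f \<gamma> ` C \<subseteq> C"
    and u: "u \<in> C" and v: "v \<in> C"
  shows "ereal ((dist (resolvent f \<gamma> u) v)\<^sup>2)
             \<le> ereal ((dist u v)\<^sup>2 - (dist u (resolvent f \<gamma> u))\<^sup>2
                      - 2 * \<gamma> * \<psi> (dist v (resolvent f \<gamma> u)))
                - ereal (2 * \<gamma>) * (f (resolvent f \<gamma> u) - f v)"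
proof -
  define z where "z = resolvent f \<gamma> u"
  have zC: "z \<in> C" using JC u unfolding z_def by blast
  have ninf: "\<And>y. f y \<noteq> -\<infinity>" using prp unfolding proper_fun_def by blast
  obtain a where a: "f z = ereal a" using resolvent_fin[OF cat prp cvx lsc gam] unfolding z_def by blast
  show ?thesis
  proof (cases "f v")
    case PInf
    then show ?thesis using a gam unfolding z_def[symmetric] by simp
  next
    case MInf
    then show ?thesis using ninf by blast
  next
    case (real b)
    define D1 where "D1 = (dist u z)\<^sup>2"
    define D2 where "D2 = (dist u v)\<^sup>2"
    define E where "E = (dist z v)\<^sup>2"
    define P where "P = \<psi> (dist z v)"
    define G where "G = 2*\<gamma>*(a-b) + 2*\<gamma>*P + D1 - D2 + E"
    define K where "K = 2*\<gamma>*P + E"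
    have P0: "P \<ge> 0" unfolding P_def by (rule psi0) simp
    have K0: "K \<ge> 0" unfolding K_def E_def using P0 gam by simp
    have key: "G \<le> t * K" if t: "0 < t" "t \<le> 1" for t
    proof -
      define w where "w = geo_comb t z v"
      have min: "f z + ereal ((dist u z)\<^sup>2 / (2 * \<gamma>)) \<le> f w + ereal ((dist u w)\<^sup>2 / (2 * \<gamma>))"
        unfolding z_def by (rule resolvent_min[OF cat prp cvx lsc gam])
      have "f w \<le> ereal (1 - t) * f z + ereal t * f v - ereal (t * (1 - t) * \<psi> (dist z v))"
        using ucv zC v t unfolding uniformly_convex_on_def w_def by auto
      then have fw: "f w \<le> ereal ((1-t)*a + t*b - t*(1-t)*P)" using a real unfolding P_def by simp
      then obtain r where r: "f w = ereal r" using ninf[of w] by (cases "f w") auto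
      have dw: "(dist u w)\<^sup>2 \<le> (1-t)*D1 + t*D2 - t*(1-t)*E"
        unfolding w_def D1_def D2_def E_def by (rule geo_comb_props(3)[OF cat]) (use t in auto)
      have A: "a + D1/(2*\<gamma>) \<le> r + (dist u w)\<^sup>2/(2*\<gamma>)" using min a r unfolding D1_def by simp
      have A2: "2*\<gamma>*a + D1 \<le> 2*\<gamma>*r + (dist u w)\<^sup>2"
      proof -
        have "2*\<gamma>*(a + D1/(2*\<gamma>)) \<le> 2*\<gamma>*(r + (dist u w)\<^sup>2/(2*\<gamma>))"
          using A gam by (intro mult_left_mono) auto
        then show ?thesis using gam by (simp add: algebra_simps)
      qed
      have B: "2*\<gamma>*r \<le> 2*\<gamma>*((1-t)*a + t*b - t*(1-t)*P)"
        using fw r gam by (intro mult_left_mono) auto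
      have "2*\<gamma>*a + D1 \<le> 2*\<gamma>*((1-t)*a + t*b - t*(1-t)*P) + ((1-t)*D1 + t*D2 - t*(1-t)*E)"
        using A2 B dw by linarith
      then have "t * (G - t*K) \<le> 0" unfolding G_def K_def by (simp add: algebra_simps)
      then have "G - t*K \<le> 0" using t by (simp add: mult_le_0_iff)
      then show ?thesis by simp
    qed
    have G0: "G \<le> 0"
    proof (rule ccontr)
      assume "\<not> G \<le> 0"
      then have Gp: "G > 0" by simp
      define t where "t = G / (K + G + 1)"
      have t0: "0 < t" using Gp K0 unfolding t_def by simp
      have t1: "t \<le> 1" using Gp K0 unfolding t_def by simp
      have "t * K < G"
      proof -
        have "t * K = G * K / (K + G + 1)" unfolding t_def by simp
        also have "\<dots> < G" using Gp K0 by (simp add: divide_simps algebra_simps add_pos_nonneg)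
        finally show ?thesis .
      qed
      then show False using key[OF t0 t1] by simp
    qed
    have dd: "dist v z = dist z v" by (simp add: dist_commute)
    show ?thesis using G0 a real gam unfolding z_def[symmetric] dd
      by (simp add: G_def D1_def D2_def E_def P_def algebra_simps)
  qed
qed


theorem lemma4p6:
  fixes f :: "'a::complete_space \<Rightarrow> ereal" and C :: "'a set" and \<psi> :: "real \<Rightarrow> real" and \<gamma> :: real
  assumes "CAT0 TYPE('a)"
    and "proper_fun f" and "convex_fun f" and "lsc_fun f"
    and "C \<noteq> {}"
    and "mono_on {0..} \<psi>" and "\<And>t. t \<ge> 0 \<Longrightarrow> \<psi> t \<ge> 0"
    and "\<And>t. t \<ge> 0 \<Longrightarrow> \<psi> t = 0 \<longleftrightarrow> t = 0"
    and "uniformly_convex_on C \<psi> f"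
    and "\<gamma> > 0" and "resolvent f \<gamma> ` C \<subseteq> C"
  shows "(\<forall>u\<in>C. \<forall>v\<in>C.
           ereal ((dist (resolvent f \<gamma> u) v)\<^sup>2)
             \<le> ereal ((dist u v)\<^sup>2 - (dist u (resolvent f \<gamma> u))\<^sup>2
                      - 2 * \<gamma> * \<psi> (dist v (resolvent f \<gamma> u)))
                - ereal (2 * \<gamma>) * (f (resolvent f \<gamma> u) - f v))
     \<and> (\<forall>x\<in>C. \<forall>y\<in>C.
           (dist (resolvent f \<gamma> x) (resolvent f \<gamma> y))\<^sup>2
             \<le> (dist x y)\<^sup>2 - 4 * \<gamma> * \<psi> (dist (resolvent f \<gamma> x) (resolvent f \<gamma> y)))"
proof -
  note cat = assms(1) and prp = assms(2) and cvx = assms(3) and lsc = assms(4)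
    and psi0 = assms(7) and ucv = assms(9) and gam = assms(10) and JC = assms(11)
  have P1: "\<And>u v. u \<in> C \<Longrightarrow> v \<in> C \<Longrightarrow> ereal ((dist (resolvent f \<gamma> u) v)\<^sup>2)
             \<le> ereal ((dist u v)\<^sup>2 - (dist u (resolvent f \<gamma> u))\<^sup>2
                      - 2 * \<gamma> * \<psi> (dist v (resolvent f \<gamma> u)))
                - ereal (2 * \<gamma>) * (f (resolvent f \<gamma> u) - f v)"
    by (rule part1[OF cat prp cvx lsc gam psi0 ucv JC]) auto
  moreover have "(dist (resolvent f \<gamma> x) (resolvent f \<gamma> y))\<^sup>2
             \<le> (dist x y)\<^sup>2 - 4 * \<gamma> * \<psi> (dist (resolvent f \<gamma> x) (resolvent f \<gamma> y))"
    if x: "x \<in> C" and y: "y \<in> C" for x y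
  proof -
    define a where "a = resolvent f \<gamma> x"
    define b where "b = resolvent f \<gamma> y"
    have aC: "a \<in> C" and bC: "b \<in> C" using JC x y unfolding a_def b_def by auto
    obtain fa where fa: "f a = ereal fa" using resolvent_fin[OF cat prp cvx lsc gam] unfolding a_def by blast
    obtain fb where fb: "f b = ereal fb" using resolvent_fin[OF cat prp cvx lsc gam] unfolding b_def by blast
    have 1: "(dist a b)\<^sup>2 \<le> (dist x b)\<^sup>2 - (dist x a)\<^sup>2 - 2 * \<gamma> * \<psi> (dist b a) - 2 * \<gamma> * (fa - fb)"
      using P1[OF x bC] fa fb unfolding a_def[symmetric] by simp
    have 2: "(dist b a)\<^sup>2 \<le> (dist y a)\<^sup>2 - (dist y b)\<^sup>2 - 2 * \<gamma> * \<psi> (dist a b) - 2 * \<gamma> * (fb - fa)"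
      using P1[OF y aC] fa fb unfolding b_def[symmetric] by simp
    have 3: "(dist x b)\<^sup>2 + (dist y a)\<^sup>2 \<le> (dist x a)\<^sup>2 + (dist y b)\<^sup>2 + (dist x y)\<^sup>2 + (dist a b)\<^sup>2"
      by (rule quad[OF cat])
    have e: "dist b a = dist a b" by (simp add: dist_commute)
    show ?thesis using 1 2 3 unfolding e a_def[symmetric] b_def[symmetric] by (simp add: algebra_simps)
  qed
  ultimately show ?thesis by blast
qed

end
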